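(* Let $b\ge 2$ and $S\in\Sigma_b^\infty$. The following are equivalent: (a) $\limsup_{n\to\infty}\frac{\log d_{LZ(b)}(S\upharpoonright n)}{n}>0$; (b) there exist $\alpha<1$ and infinitely many full parses $w\sqsubseteq S$ with $D(w)\log_b|w|<\alpha(b-1)|w|$; (c) there exist $\alpha<1$ and infinitely many full parses $w\sqsubseteq S$ with $D(w)\log_b D(w)<\alpha(b-1)|w|$.
   Context: $\Sigma_b=\{0,\dots,b-1\}$; $\Sigma_b^\infty$ is the set of infinite sequences over $\Sigma_b$; $S\upharpoonright n$ is the length-$n$ prefix of $S$; $w\sqsubseteq S$ means $w$ is a prefix of $S$. Lempel–Ziv parsing in base $b$: let $T_0=\{\lambda\}\cup\Sigma_b$. Given $w$, parse left to right: having found phrases $x(1),\dots,x(i)$ and tree $T_i$, the next phrase $x(i+1)$ is the shortest nonempty prefix of the remaining input that is a leaf of $T_i$, and $T_{i+1}=T_i\cup\{x(i+1)a:a\in\Sigma_b\}$. If the input ends exactly at the end of a phrase (or $w=\lambda$), $w=x(1)\cdots x(j)$ is a full parse; otherwise $w=x(1)\cdots x(j)u$ with $u$ a nonempty interior vertex of $T_j$, the partial phrase. $D(w)=1+(b-1)j$ if $w$ is a full parse with $j$ phrases, and $D(w)=1+(b-1)(j+1)$ if $w$ has $j$ full phrases and a partial phrase $u$; then $L(u)$ is the number of leaves of $T_j$ extending $u$. With $\mathrm{fact}_b(1+(b-1)r)=\prod_{k=1}^r(1+(b-1)k)$, the base-$b$ Lempel–Ziv martingale is $d_{LZ(b)}(w)=b^{|w|}/\mathrm{fact}_b(D(w))$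 if $w$ is a full parse, and $b^{|w|}L(u)/\mathrm{fact}_b(D(w))$ otherwise. *)

theory Defs
  imports Complex_Main "HOL-Library.Extended_Real" "HOL-Library.Liminf_Limsup"
begin

type_synonym word = "nat list"

definition lz_leaf :: "word set \<Rightarrow> word \<Rightarrow> bool" where
  "lz_leaf T x \<longleftrightarrow> x \<in> T \<and> (\<forall>a. x @ [a] \<notin> T)"

definition lz_T0 :: "nat \<Rightarrow> word set" where
  "lz_T0 b = {[]} \<union> {[a] | a. a < b}"

definition lz_grow :: "nat \<Rightarrow> word set \<Rightarrow> word \<Rightarrow> word set" where
  "lz_grow b T x = T \<union> {x @ [a] | a. a < b}"

text \<open>Parsing with fuel (the fuel is the input length, which suffices since each
phrase is nonempty). Returns (full phrases, partial phrase (or []), final tree).\<close>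
primrec lz_aux :: "nat \<Rightarrow> nat \<Rightarrow> word set \<Rightarrow> word \<Rightarrow> word list \<times> word \<times> word set" where
  "lz_aux b 0 T w = ([], w, T)"
| "lz_aux b (Suc f) T w =
     (if w = [] then ([], [], T)
      else if \<exists>k. 1 \<le> k \<and> k \<le> length w \<and> lz_leaf T (take k w) then
        (let k = (LEAST k. 1 \<le> k \<and> k \<le> length w \<and> lz_leaf T (take k w));
             x = take k w;
             r = lz_aux b f (lz_grow b T x) (drop k w)
         in (x # fst r, snd r))
      else ([], w, T))"

definition lz_parse :: "nat \<Rightarrow> word \<Rightarrow> word list \<times> word \<times> word set" where
  "lz_parse b w = lz_aux b (length w) (lz_T0 b) w"

definition lz_phrases :: "nat \<Rightarrow> word \<Rightarrow> word list" where
  "lz_phrases b w = fst (lz_parse b w)"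

definition lz_partial :: "nat \<Rightarrow> word \<Rightarrow> word" where
  "lz_partial b w = fst (snd (lz_parse b w))"

definition lz_tree :: "nat \<Rightarrow> word \<Rightarrow> word set" where
  "lz_tree b w = snd (snd (lz_parse b w))"

definition lz_full_parse :: "nat \<Rightarrow> word \<Rightarrow> bool" where
  "lz_full_parse b w \<longleftrightarrow> lz_partial b w = []"

definition lz_r :: "nat \<Rightarrow> word \<Rightarrow> nat" where
  "lz_r b w = (if lz_full_parse b w then length (lz_phrases b w) else length (lz_phrases b w) + 1)"

definition lz_D :: "nat \<Rightarrow> word \<Rightarrow> nat" where
  "lz_D b w = 1 + (b - 1) * lz_r b w"

text \<open>fact_b(1 + (b-1) r) = prod_{k=1}^r (1 + (b-1) k)\<close>
definition fact_b :: "nat \<Rightarrow> nat \<Rightarrow> nat" where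
  "fact_b b r = (\<Prod>k=1..r. 1 + (b - 1) * k)"

definition lz_L :: "nat \<Rightarrow> word \<Rightarrow> nat" where
  "lz_L b w = card {y \<in> lz_tree b w. lz_leaf (lz_tree b w) y \<and> (\<exists>v. y = lz_partial b w @ v)}"

definition d_LZ :: "nat \<Rightarrow> word \<Rightarrow> real" where
  "d_LZ b w = (if lz_full_parse b w then real b ^ length w / real (fact_b b (lz_r b w))
               else real b ^ length w * real (lz_L b w) / real (fact_b b (lz_r b w)))"

definition prefix_of :: "(nat \<Rightarrow> nat) \<Rightarrow> nat \<Rightarrow> word" where
  "prefix_of S n = map S [0..<n]"

end

theory Submission
  imports Defs "HOL-Library.Infinite_Set"
begin


definition lz_inv :: "nat \<Rightarrow> word set \<Rightarrow> bool" where
  "lz_inv b T \<longleftrightarrow> finite T \<and> [] \<in> T \<and> [0] \<in> T \<and> (\<forall>x a. x @ [a] \<in> T \<longrightarrow> x \<in> T)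
     \<and> (\<forall>x\<in>T. (\<exists>a. x @ [a] \<in> T) \<longrightarrow> (\<forall>a<b. x @ [a] \<in> T))"

lemma lz_inv_T0: "b \<ge> 1 \<Longrightarrow> lz_inv b (lz_T0 b)"
  unfolding lz_inv_def lz_T0_def by auto

lemma card_T0: "card (lz_T0 b) \<le> 1 + b"
proof -
  have "lz_T0 b = insert [] ((\<lambda>a. [a]) ` {..<b})" unfolding lz_T0_def by auto
  then show ?thesis using card_image_le[of "{..<b}" "\<lambda>a. [a]"] by (simp add: card_insert_if)
qed

lemma grow_eq: "lz_grow b T x = T \<union> (\<lambda>a. x @ [a]) ` {..<b}"
  unfolding lz_grow_def by auto

lemma lz_inv_grow:
  assumes "lz_inv b T" "lz_leaf T x"
  shows "lz_inv b (lz_grow b T x)"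
proof -
  have xT: "x \<in> T" and nc: "\<forall>a. x @ [a] \<notin> T" using assms(2) unfolding lz_leaf_def by auto
  show ?thesis unfolding lz_inv_def grow_eq
  proof (intro conjI allI impI ballI)
    show "finite (T \<union> (\<lambda>a. x @ [a]) ` {..<b})" using assms(1) unfolding lz_inv_def by auto
    show "[] \<in> T \<union> (\<lambda>a. x @ [a]) ` {..<b}" "[0] \<in> T \<union> (\<lambda>a. x @ [a]) ` {..<b}"
      using assms(1) unfolding lz_inv_def by auto
  next
    fix y a assume "y @ [a] \<in> T \<union> (\<lambda>a. x @ [a]) ` {..<b}"
    then show "y \<in> T \<union> (\<lambda>a. x @ [a]) ` {..<b}" using assms(1) xT unfolding lz_inv_def by auto
  next
    fix y a c assume y: "y \<in> T \<union> (\<lambda>a. x @ [a]) ` {..<b}"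
      and ex: "\<exists>a. y @ [a] \<in> T \<union> (\<lambda>a. x @ [a]) ` {..<b}" and c: "c < b"
    then obtain a where a: "y @ [a] \<in> T \<union> (\<lambda>a. x @ [a]) ` {..<b}" by blast
    show "y @ [c] \<in> T \<union> (\<lambda>a. x @ [a]) ` {..<b}"
    proof (cases "y @ [a] \<in> T")
      case True
      then have "y \<in> T" using assms(1) unfolding lz_inv_def by blast
      then show ?thesis using True c assms(1) unfolding lz_inv_def by blast
    next
      case False
      then have "y = x" using a by auto
      then show ?thesis using c by auto
    qed
  qed
qed

lemma card_grow: "finite T \<Longrightarrow> card (lz_grow b T x) \<le> card T + b"
  unfolding grow_eq using card_Un_le[of T "(\<lambda>a. x@[a]) ` {..<b}"] card_image_le[of "{..<b}" "\<lambda>a. x@[a]"] by simp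

lemma depth_grow: "(\<forall>y\<in>T. length y \<le> d) \<Longrightarrow> x \<in> T \<Longrightarrow> \<forall>y\<in>lz_grow b T x. length y \<le> Suc d"
  unfolding grow_eq by auto

lemma no_leaf_in_tree:
  assumes "lz_inv b T" "\<forall>c\<in>set w. c < b" "\<forall>k. 1 \<le> k \<and> k \<le> length w \<longrightarrow> \<not> lz_leaf T (take k w)"
  shows "w \<in> T"
proof -
  have "\<forall>k\<le>length w. take k w \<in> T"
  proof (intro allI impI)
    fix k assume "k \<le> length w"
    then show "take k w \<in> T"
    proof (induction k)
      case 0
      then show ?case using assms(1) unfolding lz_inv_def by simp
    next
      case (Suc k)
      then have kT: "take k w \<in> T" by simp
      have tk: "take (Suc k) w = take k w @ [w ! k]" using Suc.prems by (simp add: take_Suc_conv_app_nth)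
      have wk: "w ! k < b" using assms(2) Suc.prems by simp
      have "\<exists>a. take k w @ [a] \<in> T"
      proof (cases k)
        case 0
        then show ?thesis using assms(1) unfolding lz_inv_def by auto
      next
        case (Suc k')
        then have "\<not> lz_leaf T (take k w)" using assms(3) \<open>Suc k \<le> length w\<close> by auto
        then show ?thesis using kT unfolding lz_leaf_def by auto
      qed
      then show ?case using tk wk kT assms(1) unfolding lz_inv_def by metis
    qed
  qed
  then show ?thesis by (metis order_refl take_all)
qed

lemma aux_Nil[simp]: "lz_aux b f T [] = ([], [], T)"
  by (cases f) auto

declare lz_aux.simps(2)[simp del]

lemma aux_props:
  "\<forall>T w. lz_inv b T \<longrightarrow> (\<forall>c\<in>set w. c < b) \<longrightarrow> length w \<le> f \<longrightarrow>
    (\<forall>d. (\<forall>y\<in>T. length y \<le> d) \<longrightarrow> (\<forall>y\<in>snd (snd (lz_aux b f T w)). length y \<le> d + length (fst (lz_aux b f T w)))) \<and>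
    w = concat (fst (lz_aux b f T w)) @ fst (snd (lz_aux b f T w)) \<and>
    (\<forall>p\<in>set (fst (lz_aux b f T w)). p \<noteq> []) \<and>
    lz_inv b (snd (snd (lz_aux b f T w))) \<and>
    card (snd (snd (lz_aux b f T w))) \<le> card T + b * length (fst (lz_aux b f T w)) \<and>
    fst (snd (lz_aux b f T w)) \<in> snd (snd (lz_aux b f T w))"
proof (induction f)
  case 0
  have "\<And>T. lz_inv b T \<Longrightarrow> [] \<in> T" unfolding lz_inv_def by blast
  then show ?case by simp
next
  case (Suc f)
  show ?case
  proof (intro allI impI)
    fix T w assume inv: "lz_inv b T" and wb: "\<forall>c\<in>set w. c < b" and len: "length w \<le> Suc f"
    show "(\<forall>d. (\<forall>y\<in>T. length y \<le> d) \<longrightarrow> (\<forall>y\<in>snd (snd (lz_aux b (Suc f) T w)). length y \<le> d + length (fst (lz_aux b (Suc f) T w)))) \<and>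
    w = concat (fst (lz_aux b (Suc f) T w)) @ fst (snd (lz_aux b (Suc f) T w)) \<and>
    (\<forall>p\<in>set (fst (lz_aux b (Suc f) T w)). p \<noteq> []) \<and>
    lz_inv b (snd (snd (lz_aux b (Suc f) T w))) \<and>
    card (snd (snd (lz_aux b (Suc f) T w))) \<le> card T + b * length (fst (lz_aux b (Suc f) T w)) \<and>
    fst (snd (lz_aux b (Suc f) T w)) \<in> snd (snd (lz_aux b (Suc f) T w))"
    proof (cases "w = []")
      case True
      then have eq: "lz_aux b (Suc f) T w = ([], [], T)" using True by (simp add: lz_aux.simps(2))
      have "[] \<in> T" using inv unfolding lz_inv_def by blast
      then show ?thesis using eq True inv by simp
    next
      case wne: False
      show ?thesis
      proof (cases "\<exists>k. 1 \<le> k \<and> k \<le> length w \<and> lz_leaf T (take k w)")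
        case False
        then have eq: "lz_aux b (Suc f) T w = ([], w, T)" by (simp only: lz_aux.simps(2) if_not_P[OF wne] if_not_P[OF False] if_False)
        have "w \<in> T" using no_leaf_in_tree[OF inv wb] False by blast
        then show ?thesis using eq inv by simp
      next
        case True
        define k where "k = (LEAST k. 1 \<le> k \<and> k \<le> length w \<and> lz_leaf T (take k w))"
        have P: "1 \<le> k \<and> k \<le> length w \<and> lz_leaf T (take k w)"
          unfolding k_def using LeastI_ex[OF True] .
        define x where "x = take k w"
        define r where "r = lz_aux b f (lz_grow b T x) (drop k w)"
        have eq: "lz_aux b (Suc f) T w = (x # fst r, snd r)"
          unfolding r_def x_def k_def by (simp only: lz_aux.simps(2) if_not_P[OF wne] if_P[OF True] Let_def)
        have inv': "lz_inv b (lz_grow b T x)" using lz_inv_grow[OF inv] P x_def by simp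
        have wb': "\<forall>c\<in>set (drop k w). c < b" using wb by (meson in_set_dropD)
        have len': "length (drop k w) \<le> f" using len P by auto
        note IH = Suc.IH[THEN spec[of _ "lz_grow b T x"], THEN spec[of _ "drop k w"], THEN mp, THEN mp, THEN mp, OF inv' wb' len', folded r_def]
        have xne: "x \<noteq> []" using P wne unfolding x_def by auto
        have xT: "x \<in> T" using P unfolding x_def lz_leaf_def by auto
        have finT: "finite T" using inv unfolding lz_inv_def by blast
        have c1: "card (lz_grow b T x) \<le> card T + b" using card_grow[OF finT] .
        show ?thesis
        proof (intro conjI allI impI)
          fix d assume "\<forall>y\<in>T. length y \<le> d"
          then have "\<forall>y\<in>lz_grow b T x. length y \<le> Suc d" using depth_grow xT by blast
          then show "\<forall>y\<in>snd (snd (lz_aux b (Suc f) T w)). length y \<le> d + length (fst (lz_aux b (Suc f) T w))"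
            using IH eq by fastforce
        next
          show "w = concat (fst (lz_aux b (Suc f) T w)) @ fst (snd (lz_aux b (Suc f) T w))"
            using IH eq unfolding x_def by (metis append_assoc append_take_drop_id concat.simps(2) fst_conv snd_conv)
        next
          show "\<forall>p\<in>set (fst (lz_aux b (Suc f) T w)). p \<noteq> []" using IH eq xne by auto
        next
          show "lz_inv b (snd (snd (lz_aux b (Suc f) T w)))" using IH eq by simp
        next
          show "card (snd (snd (lz_aux b (Suc f) T w))) \<le> card T + b * length (fst (lz_aux b (Suc f) T w))"
            using IH eq c1 by simp
        next
          show "fst (snd (lz_aux b (Suc f) T w)) \<in> snd (snd (lz_aux b (Suc f) T w))" using IH eq by simp
        qed
      qed
    qed
  qed
qed


lemma aux_prefix:
  "\<forall>T w k f'. k \<le> length (fst (lz_aux b f T w)) \<longrightarrow> length (concat (take k (fst (lz_aux b f T w)))) \<le> f' \<longrightarrow>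
    fst (lz_aux b f' T (concat (take k (fst (lz_aux b f T w))))) = take k (fst (lz_aux b f T w)) \<and>
    fst (snd (lz_aux b f' T (concat (take k (fst (lz_aux b f T w)))))) = []"
proof (induction f)
  case 0
  then show ?case by simp
next
  case (Suc f)
  show ?case
  proof (intro allI impI)
    fix T w k f'
    assume kl: "k \<le> length (fst (lz_aux b (Suc f) T w))"
      and fl: "length (concat (take k (fst (lz_aux b (Suc f) T w)))) \<le> f'"
    show "fst (lz_aux b f' T (concat (take k (fst (lz_aux b (Suc f) T w))))) = take k (fst (lz_aux b (Suc f) T w)) \<and>
    fst (snd (lz_aux b f' T (concat (take k (fst (lz_aux b (Suc f) T w)))))) = []"
    proof (cases "w \<noteq> [] \<and> (\<exists>k. 1 \<le> k \<and> k \<le> length w \<and> lz_leaf T (take k w))")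
      case False
      then have "fst (lz_aux b (Suc f) T w) = []"
      proof (cases "w = []")
        case True then show ?thesis by simp
      next
        case wne: False
        then have nl: "\<not> (\<exists>k. 1 \<le> k \<and> k \<le> length w \<and> lz_leaf T (take k w))" using False by blast
        have "lz_aux b (Suc f) T w = ([], w, T)" by (simp only: lz_aux.simps(2) if_not_P[OF wne] if_not_P[OF nl] if_False)
        then show ?thesis by simp
      qed
      then show ?thesis using kl by simp
    next
      case True
      then have wne: "w \<noteq> []" and ex: "\<exists>k. 1 \<le> k \<and> k \<le> length w \<and> lz_leaf T (take k w)" by auto
      define k0 where "k0 = (LEAST k. 1 \<le> k \<and> k \<le> length w \<and> lz_leaf T (take k w))"
      have P: "1 \<le> k0 \<and> k0 \<le> length w \<and> lz_leaf T (take k0 w)"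
        unfolding k0_def using LeastI_ex[OF ex] .
      have Pmin: "\<And>k. 1 \<le> k \<and> k \<le> length w \<and> lz_leaf T (take k w) \<Longrightarrow> k0 \<le> k"
        unfolding k0_def by (rule Least_le)
      define x where "x = take k0 w"
      define r where "r = lz_aux b f (lz_grow b T x) (drop k0 w)"
      have eq: "lz_aux b (Suc f) T w = (x # fst r, snd r)"
        unfolding r_def x_def k0_def by (simp only: lz_aux.simps(2) if_not_P[OF wne] if_P[OF ex] Let_def)
      have lx: "length x = k0" using P unfolding x_def by simp
      show ?thesis
      proof (cases k)
        case 0
        then show ?thesis by simp
      next
        case (Suc k')
        define v where "v = concat (take k (fst (lz_aux b (Suc f) T w)))"
        have v: "v = x @ concat (take k' (fst r))" unfolding v_def eq Suc by simp
        have k'l: "k' \<le> length (fst r)" using kl unfolding eq Suc by simp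
        have "length v \<ge> 1" using v lx P by simp
        then have "f' \<ge> 1" using fl unfolding v_def[symmetric] by linarith
        then obtain f'' where f'': "f' = Suc f''" by (cases f') auto
        have vne: "v \<noteq> []" using \<open>length v \<ge> 1\<close> by auto
        have tk: "\<And>j. j \<le> k0 \<Longrightarrow> take j v = take j w"
          using v lx unfolding x_def by (simp add: min_def)
        have Pv: "1 \<le> k0 \<and> k0 \<le> length v \<and> lz_leaf T (take k0 v)"
          using P tk[of k0] v lx by simp
        have exv: "\<exists>k. 1 \<le> k \<and> k \<le> length v \<and> lz_leaf T (take k v)" using Pv by blast
        have lv: "(LEAST k. 1 \<le> k \<and> k \<le> length v \<and> lz_leaf T (take k v)) = k0"
        proof (rule Least_equality)
          show "1 \<le> k0 \<and> k0 \<le> length v \<and> lz_leaf T (take k0 v)" by (rule Pv)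
        next
          fix j assume j: "1 \<le> j \<and> j \<le> length v \<and> lz_leaf T (take j v)"
          show "k0 \<le> j"
          proof (rule ccontr)
            assume "\<not> k0 \<le> j"
            then have "j \<le> k0" by simp
            then have "1 \<le> j \<and> j \<le> length w \<and> lz_leaf T (take j w)" using j tk P by auto
            then have "k0 \<le> j" by (rule Pmin)
            then show False using \<open>\<not> k0 \<le> j\<close> by simp
          qed
        qed
        have tv: "take k0 v = x" using tk[of k0] unfolding x_def by simp
        have dv: "drop k0 v = concat (take k' (fst r))" using v lx by simp
        define r' where "r' = lz_aux b f'' (lz_grow b T x) (drop k0 v)"
        have eqv: "lz_aux b f' T v = (x # fst r', snd r')"
          unfolding r'_def f'' using lv tv by (simp only: lz_aux.simps(2) if_not_P[OF vne] if_P[OF exv] Let_def)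
        have fl'': "length (concat (take k' (fst r))) \<le> f''" using fl v lx P f'' unfolding v_def[symmetric] by simp
        have IH: "fst r' = take k' (fst r) \<and> fst (snd r') = []"
          using Suc.IH k'l fl'' unfolding r'_def dv r_def by blast
        show ?thesis using IH eqv unfolding v_def[symmetric] unfolding eq Suc by simp
      qed
    qed
  qed
qed



lemma fact_b_Suc: "fact_b b (Suc j) = fact_b b j * (1 + (b - 1) * Suc j)"
  unfolding fact_b_def by (simp add: prod.cl_ivl_Suc)

lemma fact_b_pos: "fact_b b j \<ge> 1"
proof (induction j)
  case 0
  then show ?case by (simp add: fact_b_def)
next
  case (Suc j)
  have "1 * 1 \<le> fact_b b j * (1 + (b - 1) * Suc j)" using Suc.IH by (intro mult_le_mono) auto
  then show ?case by (simp add: fact_b_Suc)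
qed

lemma fact_b_mono: "fact_b b j \<le> fact_b b (Suc j)"
  by (simp add: fact_b_Suc)

lemma fact_b_upper: "fact_b b j \<le> (1 + (b - 1) * j) ^ j"
proof (induction j)
  case 0
  then show ?case by (simp add: fact_b_def)
next
  case (Suc j)
  have "(1 + (b - 1) * j) ^ j \<le> (1 + (b - 1) * Suc j) ^ j"
    by (rule power_mono) auto
  then have "fact_b b j \<le> (1 + (b - 1) * Suc j) ^ j" using Suc by linarith
  then have "fact_b b j * (1 + (b - 1) * Suc j) \<le> (1 + (b - 1) * Suc j) ^ j * (1 + (b - 1) * Suc j)"
    by (rule mult_right_mono) simp
  then show ?case by (simp only: fact_b_Suc power_Suc2)
qed

lemma ln_fact_b_upper: "ln (real (fact_b b j)) \<le> real j * ln (1 + real (b - 1) * real j)"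
proof -
  have "real (fact_b b j) \<le> real ((1 + (b - 1) * j) ^ j)" using fact_b_upper by (simp only: of_nat_le_iff)
  then have "ln (real (fact_b b j)) \<le> ln (real ((1 + (b - 1) * j) ^ j))"
    using fact_b_pos[of b j] by (intro ln_mono) auto
  also have "\<dots> = real j * ln (1 + real (b - 1) * real j)" by (simp add: ln_realpow)
  finally show ?thesis .
qed

lemma fact_le_fact_b: "b \<ge> 2 \<Longrightarrow> fact j \<le> fact_b b j"
proof (induction j)
  case 0
  then show ?case by (simp add: fact_b_def)
next
  case (Suc j)
  obtain c where c: "b = Suc (Suc c)" using Suc.prems by (metis add_2_eq_Suc le_iff_add)
  have "Suc j \<le> 1 + (b - 1) * Suc j" unfolding c by simp
  then have "Suc j * fact j \<le> (1 + (b - 1) * Suc j) * fact_b b j" using Suc by (intro mult_le_mono) auto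
  then show ?case by (simp add: fact_b_Suc mult.commute)
qed

lemma pow_le_exp_fact: "real j ^ j \<le> exp (real j) * fact j"
proof (induction j)
  case 0
  then show ?case by simp
next
  case (Suc j)
  have a: "(real j + 1) ^ j \<le> exp 1 * real j ^ j"
  proof (cases "j = 0")
    case True then show ?thesis by simp
  next
    case False
    then have jp: "real j > 0" by simp
    have "real j + 1 = real j * (1 + 1 / real j)" using jp by (simp add: field_simps)
    also have "\<dots> \<le> real j * exp (1 / real j)"
      using jp exp_ge_add_one_self[of "1 / real j"] by (intro mult_left_mono) auto
    finally have "real j + 1 \<le> real j * exp (1 / real j)" .
    then have "(real j + 1) ^ j \<le> (real j * exp (1 / real j)) ^ j" by (intro power_mono) auto
    also have "\<dots> = real j ^ j * exp (1 / real j) ^ j" by (simp add: power_mult_distrib)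
    also have "exp (1 / real j) ^ j = exp 1" using jp by (simp add: exp_of_nat_mult[symmetric])
    finally show ?thesis by (simp add: mult.commute)
  qed
  have "real (Suc j) ^ Suc j = (real j + 1) * (real j + 1) ^ j" by (simp add: add.commute)
  also have "\<dots> \<le> (real j + 1) * (exp 1 * real j ^ j)" using a by (intro mult_left_mono) auto
  also have "\<dots> \<le> (real j + 1) * (exp 1 * (exp (real j) * fact j))"
    using Suc.IH by (intro mult_left_mono) auto
  also have "\<dots> = exp (real (Suc j)) * fact (Suc j)"
    by (simp add: exp_add[symmetric] algebra_simps)
  finally show ?case .
qed

lemma ln_fact_b_lower:
  assumes "b \<ge> 2"
  shows "real j * ln (real j) - real j \<le> ln (real (fact_b b j))"
proof (cases "j = 0")
  case True
  then show ?thesis using fact_b_pos[of b j] by simp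
next
  case False
  then have jp: "real j > 0" by simp
  have "real j * ln (real j) = ln (real j ^ j)" by (simp add: ln_realpow)
  also have "\<dots> \<le> ln (exp (real j) * fact j)"
    using pow_le_exp_fact[of j] jp by (intro ln_mono) auto
  also have "\<dots> = real j + ln (fact j)" by (simp add: ln_mult)
  also have "ln (fact j) \<le> ln (real (fact_b b j))"
  proof -
    have "(fact j :: real) \<le> real (fact_b b j)"
      by (metis of_nat_fact of_nat_le_iff fact_le_fact_b[OF assms])
    then show ?thesis by (intro ln_mono) auto
  qed
  finally show ?thesis by simp
qed

lemma small_ratio:
  fixes A B \<eta> :: real
  assumes "A > 0" "B \<ge> 0" "\<eta> > 0"
  shows "\<exists>M::nat. \<forall>m\<ge>M. \<forall>j::nat. 1 \<le> j \<longrightarrow> real j * ln (real j) \<le> A * real m + B * real j \<longrightarrow> real j \<le> \<eta> * real m"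
proof -
  define M :: nat where "M = nat \<lceil>exp (B + A / \<eta>) / \<eta>\<rceil> + 1"
  show ?thesis
  proof (intro exI allI impI)
    fix m :: nat and j :: nat
    assume mM: "M \<le> m" and j1: "1 \<le> j" and h: "real j * ln (real j) \<le> A * real m + B * real j"
    have "exp (B + A / \<eta>) / \<eta> \<le> real m" using mM unfolding M_def by linarith
    then have e: "exp (B + A / \<eta>) \<le> \<eta> * real m" using assms(3) by (simp add: field_simps)
    then have em: "\<eta> * real m > 0" using exp_gt_zero[of "B + A / \<eta>"] by linarith
    have lnm: "B + A / \<eta> \<le> ln (\<eta> * real m)"
      using e by (metis exp_gt_zero ln_exp ln_mono)
    show "real j \<le> \<eta> * real m"
    proof (rule ccontr)
      assume "\<not> real j \<le> \<eta> * real m"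
      then have gt: "real j > \<eta> * real m" by simp
      have "ln (\<eta> * real m) \<le> ln (real j)" using gt em by (intro ln_mono) auto
      then have "B + A / \<eta> \<le> ln (real j)" using lnm by linarith
      then have "real j * (B + A / \<eta>) \<le> real j * ln (real j)" using j1 by (intro mult_left_mono) auto
      then have "real j * B + real j * (A / \<eta>) \<le> A * real m + B * real j" using h by (simp add: algebra_simps)
      then have "real j * (A / \<eta>) \<le> A * real m" by (simp add: algebra_simps)
      moreover have "real j * (A / \<eta>) > (\<eta> * real m) * (A / \<eta>)"
        using gt assms by (intro mult_strict_right_mono) auto
      moreover have "(\<eta> * real m) * (A / \<eta>) = A * real m" using assms(3) by simp
      ultimately show False by linarith
    qed
  qed
qed

lemma ln_le_2sqrt: "y > 0 \<Longrightarrow> ln y \<le> 2 * sqrt y"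
proof -
  assume y: "y > 0"
  have "ln (sqrt y) \<le> sqrt y - 1" using y by (intro ln_le_minus_one) auto
  moreover have "ln y = 2 * ln (sqrt y)" using y by (simp add: ln_sqrt)
  ultimately show ?thesis by linarith
qed

lemma D_ln_ratio:
  fixes D m :: real
  assumes "D > 0" "m > 0"
  shows "D * ln (m / D) \<le> 2 * sqrt (D * m)"
proof -
  have "D * ln (m / D) \<le> D * (2 * sqrt (m / D))"
    using assms ln_le_2sqrt[of "m / D"] by (intro mult_left_mono) auto
  also have "D * (2 * sqrt (m / D)) = 2 * (sqrt (D * D) * sqrt (m / D))" using assms by simp
  also have "\<dots> = 2 * sqrt (D * D * (m / D))" by (simp only: real_sqrt_mult)
  also have "D * D * (m / D) = D * m" using assms by (simp add: field_simps)
  finally show ?thesis .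
qed



lemma length_concat_ge: "\<forall>p\<in>set ps. p \<noteq> [] \<Longrightarrow> length ps \<le> length (concat ps)"
proof (induction ps)
  case Nil
  then show ?case by simp
next
  case (Cons a ps)
  then have "length a \<ge> 1" by (cases a) auto
  then show ?case using Cons by simp
qed

lemma prefix_of_take: "m \<le> n \<Longrightarrow> prefix_of S m = take m (prefix_of S n)"
  unfolding prefix_of_def by (simp add: take_map)

lemma parse_facts:
  assumes b2: "b \<ge> 2" and Sb: "\<forall>i. S i < b"
  shows "prefix_of S n = concat (lz_phrases b (prefix_of S n)) @ lz_partial b (prefix_of S n)"
    and "length (lz_phrases b (prefix_of S n)) \<le> length (concat (lz_phrases b (prefix_of S n)))"
    and "length (lz_partial b (prefix_of S n)) \<le> 1 + length (lz_phrases b (prefix_of S n))"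
    and "finite (lz_tree b (prefix_of S n))"
    and "card (lz_tree b (prefix_of S n)) \<le> 1 + b + b * length (lz_phrases b (prefix_of S n))"
proof -
  define w where "w = prefix_of S n"
  have inv0: "lz_inv b (lz_T0 b)" using b2 by (intro lz_inv_T0) auto
  have wb: "\<forall>c\<in>set w. c < b" using Sb unfolding w_def prefix_of_def by auto
  have dep0: "\<forall>y\<in>lz_T0 b. length y \<le> 1" unfolding lz_T0_def by auto
  note P = aux_props[of b "length w", THEN spec[of _ "lz_T0 b"], THEN spec[of _ w], THEN mp, THEN mp, THEN mp, OF inv0 wb order_refl]
  have pe: "lz_parse b w = lz_aux b (length w) (lz_T0 b) w" unfolding lz_parse_def by simp
  note defs = lz_phrases_def lz_partial_def lz_tree_def pe
  show "prefix_of S n = concat (lz_phrases b (prefix_of S n)) @ lz_partial b (prefix_of S n)"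
    using P unfolding w_def[symmetric] defs by blast
  show "length (lz_phrases b (prefix_of S n)) \<le> length (concat (lz_phrases b (prefix_of S n)))"
    using P length_concat_ge unfolding w_def[symmetric] defs by blast
  have "lz_inv b (lz_tree b w)" using P unfolding defs by blast
  then show "finite (lz_tree b (prefix_of S n))" unfolding w_def lz_inv_def by blast
  have "card (lz_tree b w) \<le> card (lz_T0 b) + b * length (lz_phrases b w)" using P unfolding defs by blast
  then show "card (lz_tree b (prefix_of S n)) \<le> 1 + b + b * length (lz_phrases b (prefix_of S n))"
    using card_T0[of b] unfolding w_def by linarith
  have "\<forall>y\<in>lz_tree b w. length y \<le> 1 + length (lz_phrases b w)" using P dep0 unfolding defs by blast
  moreover have "lz_partial b w \<in> lz_tree b w" using P unfolding defs by blast
  ultimately show "length (lz_partial b (prefix_of S n)) \<le> 1 + length (lz_phrases b (prefix_of S n))"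
    unfolding w_def by blast
qed

lemma prefix_full:
  fixes b n :: nat and S :: "nat \<Rightarrow> nat"
  assumes b2: "b \<ge> 2" and Sb: "\<forall>i. S i < b"
  defines "m \<equiv> length (concat (lz_phrases b (prefix_of S n)))"
  shows "lz_full_parse b (prefix_of S m) \<and> lz_phrases b (prefix_of S m) = lz_phrases b (prefix_of S n)"
proof -
  define w where "w = prefix_of S n"
  define ps where "ps = lz_phrases b w"
  have eqw: "w = concat ps @ lz_partial b w" using parse_facts(1)[OF b2 Sb, of n] unfolding w_def ps_def by simp
  have mn: "m \<le> n" unfolding m_def using arg_cong[OF eqw, of length] unfolding w_def ps_def
    by (simp add: prefix_of_def)
  have mps: "m = length (concat ps)" unfolding m_def ps_def w_def by simp
  have "prefix_of S m = take m w" using prefix_of_take[OF mn, of S] unfolding w_def by simp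
  also have "\<dots> = concat ps" using eqw mps by (metis append_eq_conv_conj)
  finally have pm: "prefix_of S m = concat ps" .
  have ps: "ps = fst (lz_aux b (length w) (lz_T0 b) w)" unfolding ps_def lz_phrases_def lz_parse_def by simp
  have "fst (lz_aux b (length (concat (take (length ps) ps))) (lz_T0 b) (concat (take (length ps) ps))) = take (length ps) ps \<and>
    fst (snd (lz_aux b (length (concat (take (length ps) ps))) (lz_T0 b) (concat (take (length ps) ps)))) = []"
    using aux_prefix[of b "length w", THEN spec[of _ "lz_T0 b"], THEN spec[of _ w], THEN spec[of _ "length ps"],
      THEN spec[of _ "length (concat (take (length ps) ps))"]] unfolding ps[symmetric] by simp
  then have "fst (lz_aux b (length (concat ps)) (lz_T0 b) (concat ps)) = ps \<and>
    fst (snd (lz_aux b (length (concat ps)) (lz_T0 b) (concat ps))) = []" by simp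
  then have "lz_full_parse b (concat ps) \<and> lz_phrases b (concat ps) = ps"
    unfolding lz_full_parse_def lz_phrases_def lz_partial_def lz_parse_def by simp
  then show ?thesis unfolding pm unfolding ps_def w_def by simp
qed



lemma d_full_ln:
  assumes "b \<ge> 2" "lz_full_parse b w"
  shows "ln (d_LZ b w) = real (length w) * ln (real b) - ln (real (fact_b b (length (lz_phrases b w))))"
proof -
  have r: "lz_r b w = length (lz_phrases b w)" using assms(2) unfolding lz_r_def by simp
  have d: "d_LZ b w = real b ^ length w / real (fact_b b (length (lz_phrases b w)))"
    using assms(2) unfolding d_LZ_def r by simp
  have p1: "real b ^ length w > 0" using assms(1) by simp
  have p2: "real (fact_b b (length (lz_phrases b w))) > 0" using fact_b_pos[of b] by (simp add: Suc_le_eq)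
  show ?thesis unfolding d using p1 p2 assms(1) by (simp add: ln_div ln_realpow)
qed

lemma D_full: "lz_full_parse b w \<Longrightarrow> lz_D b w = 1 + (b - 1) * length (lz_phrases b w)"
  unfolding lz_D_def lz_r_def by simp

lemma d_nonneg: "d_LZ b w \<ge> 0"
  unfolding d_LZ_def by simp

lemma d_upper:
  assumes b2: "b \<ge> 2" and Sb: "\<forall>i. S i < b"
  shows "d_LZ b (prefix_of S n) \<le> real b ^ n * (1 + real b + real b * real (length (lz_phrases b (prefix_of S n))))
            / real (fact_b b (length (lz_phrases b (prefix_of S n))))"
proof -
  define w where "w = prefix_of S n"
  define j where "j = length (lz_phrases b w)"
  have lw: "length w = n" unfolding w_def prefix_of_def by simp
  have Fp: "real (fact_b b j) > 0" using fact_b_pos[of b j] by simp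
  have K1: "1 \<le> 1 + real b + real b * real j" by simp
  have bn: "real b ^ n \<ge> 0" by simp
  show ?thesis
  proof (cases "lz_full_parse b w")
    case True
    have r: "lz_r b w = j" using True unfolding lz_r_def j_def by simp
    have "d_LZ b w = real b ^ n / real (fact_b b j)" using True unfolding d_LZ_def r lw by simp
    also have "\<dots> \<le> real b ^ n * (1 + real b + real b * real j) / real (fact_b b j)"
      using Fp K1 bn by (intro divide_right_mono) (auto simp: mult_le_cancel_left1)
    finally show ?thesis unfolding w_def j_def .
  next
    case False
    have r: "lz_r b w = Suc j" using False unfolding lz_r_def j_def by simp
    have fin: "finite (lz_tree b w)" using parse_facts(4)[OF b2 Sb] unfolding w_def by blast
    have "lz_L b w \<le> card (lz_tree b w)" unfolding lz_L_def using fin by (intro card_mono) auto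
    also have "\<dots> \<le> 1 + b + b * j" using parse_facts(5)[OF b2 Sb] unfolding w_def j_def by blast
    finally have L: "real (lz_L b w) \<le> 1 + real b + real b * real j" by (simp flip: of_nat_mult of_nat_add)
    have F: "real (fact_b b j) \<le> real (fact_b b (Suc j))" using fact_b_mono[of b j] by simp
    have "d_LZ b w = real b ^ n * real (lz_L b w) / real (fact_b b (Suc j))" using False unfolding d_LZ_def r lw by simp
    also have "\<dots> \<le> real b ^ n * (1 + real b + real b * real j) / real (fact_b b (Suc j))"
      using L bn by (intro divide_right_mono mult_left_mono) auto
    also have "\<dots> \<le> real b ^ n * (1 + real b + real b * real j) / real (fact_b b j)"
      using F Fp by (intro divide_left_mono) auto
    finally show ?thesis unfolding w_def j_def .
  qed
qed

lemma limsup_ge_of_freq: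
  fixes f :: "nat \<Rightarrow> ereal"
  assumes "\<forall>N. \<exists>n\<ge>N. c \<le> f n"
  shows "c \<le> limsup f"
proof (rule ccontr)
  assume "\<not> c \<le> limsup f"
  then have "limsup f < c" by simp
  then have "eventually (\<lambda>n. f n < c) sequentially" by (rule Limsup_lessD)
  then obtain N where "\<forall>n\<ge>N. f n < c" unfolding eventually_sequentially by blast
  then show False using assms by (meson not_le)
qed

lemma freq_of_limsup:
  fixes f :: "nat \<Rightarrow> real"
  assumes "limsup (\<lambda>n. ereal (f n)) > 0"
  shows "\<exists>e>0. \<forall>N. \<exists>n\<ge>N. e < f n"
proof -
  obtain z where z: "0 < ereal z" "ereal z < limsup (\<lambda>n. ereal (f n))" using ereal_dense2[OF assms] by blast
  have "\<not> (limsup (\<lambda>n. ereal (f n)) \<le> ereal z)" using z by simp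
  then obtain y where y: "y > ereal z" "\<not> eventually (\<lambda>n. y > ereal (f n)) sequentially"
    unfolding Limsup_le_iff by blast
  then have "\<forall>N. \<exists>n\<ge>N. \<not> y > ereal (f n)" unfolding not_eventually frequently_sequentially by blast
  then have "\<forall>N. \<exists>n\<ge>N. z < f n" using y(1) by (meson less_ereal.simps(1) not_le order_less_le_trans)
  then show ?thesis using z(1) by auto
qed



lemma BA:
  fixes b :: nat and S :: "nat \<Rightarrow> nat" and \<alpha> :: real
  assumes b2: "b \<ge> 2" and Sb: "\<forall>i. S i < b" and a1: "\<alpha> < 1"
    and inf: "infinite {n. lz_full_parse b (prefix_of S n) \<and>
                 real (lz_D b (prefix_of S n)) * log b (real n) < \<alpha> * real (b - 1) * real n}"
  shows "limsup (\<lambda>n. ereal (ln (d_LZ b (prefix_of S n)) / real n)) > 0"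
proof -
  define lb where "lb = ln (real b)"
  have lbp: "lb > 0" unfolding lb_def using b2 by simp
  define c where "c = (1 - \<alpha>) * lb"
  have cp: "c > 0" unfolding c_def using a1 lbp by simp
  define M :: nat where "M = nat \<lceil>exp (\<alpha> * real (b - 1) * lb)\<rceil> + 1"
  have "\<forall>N. \<exists>n\<ge>N. ereal c \<le> ereal (ln (d_LZ b (prefix_of S n)) / real n)"
  proof
    fix N
    obtain n where nN: "n \<ge> max N M" and nin: "n \<in> {n. lz_full_parse b (prefix_of S n) \<and>
                 real (lz_D b (prefix_of S n)) * log b (real n) < \<alpha> * real (b - 1) * real n}"
      using inf unfolding infinite_nat_iff_unbounded_le by blast
    define w where "w = prefix_of S n"
    define j where "j = length (lz_phrases b w)"
    have full: "lz_full_parse b w" using nin unfolding w_def by simp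
    have hyp: "real (lz_D b w) * (ln (real n) / lb) < \<alpha> * real (b - 1) * real n"
      using nin unfolding w_def lb_def log_def by simp
    have Dj: "lz_D b w = 1 + (b - 1) * j" using D_full[OF full] unfolding j_def .
    define D where "D = real (lz_D b w)"
    have Dr: "D = 1 + real (b - 1) * real j" unfolding D_def Dj by simp
    have lw: "length w = n" unfolding w_def prefix_of_def by simp
    have n1: "real n \<ge> 1" using nN unfolding M_def by simp
    have "exp (\<alpha> * real (b - 1) * lb) \<le> real n" using nN unfolding M_def by linarith
    then have lnn: "\<alpha> * real (b - 1) * lb \<le> ln (real n)"
      by (metis exp_gt_zero ln_exp ln_mono)
    have lnn0: "ln (real n) \<ge> 0" using n1 by simp
    have hyp': "D * ln (real n) < \<alpha> * real (b - 1) * real n * lb"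
    proof -
      have "D * ln (real n) = (D * (ln (real n) / lb)) * lb" using lbp by simp
      also have "\<dots> < (\<alpha> * real (b - 1) * real n) * lb"
        using hyp lbp unfolding D_def by (intro mult_strict_right_mono) auto
      finally show ?thesis .
    qed
    have Dn: "D \<le> real n"
    proof (rule ccontr)
      assume "\<not> D \<le> real n"
      then have "real n * ln (real n) \<le> D * ln (real n)" using lnn0 by (intro mult_right_mono) auto
      moreover have "real n * (\<alpha> * real (b - 1) * lb) \<le> real n * ln (real n)"
        using lnn n1 by (intro mult_left_mono) auto
      ultimately show False using hyp' by (simp add: algebra_simps)
    qed
    have D1: "D \<ge> 1" unfolding Dr by simp
    have lnF: "ln (real (fact_b b j)) \<le> real j * ln D" using ln_fact_b_upper[of b j] unfolding Dr .
    have "ln D \<le> ln (real n)" using Dn D1 by (intro ln_mono) auto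
    then have "real j * ln D \<le> real j * ln (real n)" by (intro mult_left_mono) auto
    moreover have "real (b - 1) * real j * ln (real n) \<le> D * ln (real n)"
      using lnn0 unfolding Dr by (intro mult_right_mono) auto
    then have e1: "real (b - 1) * (real j * ln (real n)) \<le> D * ln (real n)" by (simp only: mult.assoc)
    have e2: "\<alpha> * real (b - 1) * real n * lb = real (b - 1) * (\<alpha> * real n * lb)" by simp
    have "real (b - 1) * (real j * ln (real n)) < real (b - 1) * (\<alpha> * real n * lb)"
      using e1 e2 hyp' by linarith
    then have jl: "real j * ln (real n) < \<alpha> * real n * lb" using b2 by (simp add: mult_less_cancel_left)
    have eqd: "ln (d_LZ b w) = real n * lb - ln (real (fact_b b j))"
      using d_full_ln[OF b2 full] unfolding lw lb_def j_def .
    have "c * real n < real n * lb - ln (real (fact_b b j))" using lnF \<open>real j * ln D \<le> real j * ln (real n)\<close> jl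
      unfolding c_def by (simp add: algebra_simps)
    then have "c * real n < ln (d_LZ b w)" using eqd by simp
    then have "c < ln (d_LZ b w) / real n" using n1 by (simp add: field_simps)
    then show "\<exists>n\<ge>N. ereal c \<le> ereal (ln (d_LZ b (prefix_of S n)) / real n)"
      using nN unfolding w_def by (intro exI[of _ n]) auto
  qed
  then have "ereal c \<le> limsup (\<lambda>n. ereal (ln (d_LZ b (prefix_of S n)) / real n))"
    by (rule limsup_ge_of_freq)
  then show ?thesis using cp by (meson ereal_less(2) less_le_trans zero_less_real_of_ereal) 
qed



lemma CB:
  fixes b :: nat and S :: "nat \<Rightarrow> nat" and \<alpha> :: real
  assumes b2: "b \<ge> 2" and a1: "\<alpha> < 1"
    and inf: "infinite {n. lz_full_parse b (prefix_of S n) \<and>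
                 real (lz_D b (prefix_of S n)) * log b (real (lz_D b (prefix_of S n))) < \<alpha> * real (b - 1) * real n}"
  shows "\<exists>\<alpha>'::real. \<alpha>' < 1 \<and> infinite {n. lz_full_parse b (prefix_of S n) \<and>
                 real (lz_D b (prefix_of S n)) * log b (real n) < \<alpha>' * real (b - 1) * real n}"
proof -
  define lb where "lb = ln (real b)"
  have lbp: "lb > 0" unfolding lb_def using b2 by simp
  have b1: "real (b - 1) \<ge> 1" using b2 by simp
  define \<alpha>' where "\<alpha>' = (1 + \<alpha>) / 2"
  define \<delta> where "\<delta> = (1 - \<alpha>) / 2 * real (b - 1) * lb"
  have dp: "\<delta> > 0" unfolding \<delta>_def using a1 lbp b1 by simp
  define \<eta> where "\<eta> = \<delta>^2 / 4"
  have ep: "\<eta> > 0" unfolding \<eta>_def using dp by simp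
  define A where "A = \<bar>\<alpha>\<bar> * real (b - 1) * lb + 1"
  have Ap: "A > 0" unfolding A_def using lbp b1 by (simp add: add_nonneg_pos)
  obtain M where M: "\<forall>m\<ge>M. \<forall>j::nat. 1 \<le> j \<longrightarrow> real j * ln (real j) \<le> A * real m + 0 * real j \<longrightarrow> real j \<le> \<eta> * real m"
    using small_ratio[OF Ap _ ep, of 0] by auto
  have "\<forall>N. \<exists>n\<ge>N. n \<in> {n. lz_full_parse b (prefix_of S n) \<and>
                 real (lz_D b (prefix_of S n)) * log b (real n) < \<alpha>' * real (b - 1) * real n}"
  proof
    fix N
    obtain n where nN: "n \<ge> max N (max M 1)" and nin: "n \<in> {n. lz_full_parse b (prefix_of S n) \<and>
                 real (lz_D b (prefix_of S n)) * log b (real (lz_D b (prefix_of S n))) < \<alpha> * real (b - 1) * real n}"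
      using inf unfolding infinite_nat_iff_unbounded_le by blast
    define Dn where "Dn = lz_D b (prefix_of S n)"
    define D where "D = real Dn"
    have full: "lz_full_parse b (prefix_of S n)" using nin by simp
    have hyp: "D * (ln D / lb) < \<alpha> * real (b - 1) * real n"
      using nin unfolding D_def Dn_def lb_def log_def by simp
    have Dn1: "Dn \<ge> 1" unfolding Dn_def lz_D_def by simp
    then have D1: "D \<ge> 1" unfolding D_def by simp
    have n1: "real n \<ge> 1" using nN by simp
    have hyp': "D * ln D < \<alpha> * real (b - 1) * real n * lb"
    proof -
      have "D * ln D = (D * (ln D / lb)) * lb" using lbp by simp
      also have "\<dots> < (\<alpha> * real (b - 1) * real n) * lb"
        using hyp lbp by (intro mult_strict_right_mono) auto
      finally show ?thesis .
    qed
    have "\<alpha> * real (b - 1) * real n * lb \<le> A * real n"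
    proof -
      have "\<alpha> * real (b - 1) * real n * lb = (\<alpha> * real (b - 1) * lb) * real n" by simp
      also have "\<dots> \<le> A * real n"
      proof (rule mult_right_mono)
        have "\<alpha> * (real (b - 1) * lb) \<le> \<bar>\<alpha>\<bar> * (real (b - 1) * lb)"
          by (rule mult_right_mono) (use lbp b1 in auto)
        then show "\<alpha> * real (b - 1) * lb \<le> A" unfolding A_def by (simp add: mult.assoc)
      qed (use n1 in auto)
      finally show ?thesis .
    qed
    then have "real Dn * ln (real Dn) \<le> A * real n + 0 * real Dn" using hyp' unfolding D_def by simp
    then have Dle: "D \<le> \<eta> * real n" using M nN Dn1 unfolding D_def by auto
    have "ln (real n) = ln D + ln (real n / D)" using D1 n1 by (simp add: ln_div)
    then have "D * ln (real n) = D * ln D + D * ln (real n / D)" by (simp add: algebra_simps)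
    also have "D * ln (real n / D) \<le> 2 * sqrt (D * real n)" using D1 n1 by (intro D_ln_ratio) auto
    also have "sqrt (D * real n) \<le> sqrt ((\<delta> * real n / 2)^2)"
    proof (rule real_sqrt_le_mono)
      have "D * real n \<le> (\<eta> * real n) * real n" using Dle n1 by (intro mult_right_mono) auto
      also have "\<dots> = (\<delta> * real n / 2)^2" unfolding \<eta>_def by (simp add: power2_eq_square)
      finally show "D * real n \<le> (\<delta> * real n / 2)^2" .
    qed
    also have "sqrt ((\<delta> * real n / 2)^2) = \<delta> * real n / 2" using dp n1 by simp
    finally have "D * ln (real n) \<le> D * ln D + \<delta> * real n" by simp
    also have "\<dots> < \<alpha> * real (b - 1) * real n * lb + \<delta> * real n" using hyp' by simp
    also have "\<dots> = \<alpha>' * real (b - 1) * real n * lb" unfolding \<alpha>'_def \<delta>_def by (simp add: field_simps)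
    finally have "D * ln (real n) < \<alpha>' * real (b - 1) * real n * lb" .
    then have "D * (ln (real n) / lb) < \<alpha>' * real (b - 1) * real n" using lbp by (simp add: field_simps)
    then have "n \<in> {n. lz_full_parse b (prefix_of S n) \<and>
                 real (lz_D b (prefix_of S n)) * log b (real n) < \<alpha>' * real (b - 1) * real n}"
      using full unfolding D_def Dn_def log_def lb_def by simp
    then show "\<exists>n\<ge>N. n \<in> {n. lz_full_parse b (prefix_of S n) \<and>
                 real (lz_D b (prefix_of S n)) * log b (real n) < \<alpha>' * real (b - 1) * real n}"
      using nN by auto
  qed
  then show ?thesis unfolding infinite_nat_iff_unbounded_le[symmetric] using a1 unfolding \<alpha>'_def
    by (intro exI[of _ "(1 + \<alpha>) / 2"]) auto
qed



lemma AC: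
  fixes b :: nat and S :: "nat \<Rightarrow> nat"
  assumes b2: "b \<ge> 2" and Sb: "\<forall>i. S i < b"
    and lim: "limsup (\<lambda>n. ereal (ln (d_LZ b (prefix_of S n)) / real n)) > 0"
  shows "\<exists>\<alpha>::real. \<alpha> < 1 \<and> infinite {n. lz_full_parse b (prefix_of S n) \<and>
                 real (lz_D b (prefix_of S n)) * log b (real (lz_D b (prefix_of S n))) < \<alpha> * real (b - 1) * real n}"
proof -
  define lb where "lb = ln (real b)"
  have lbp: "lb > 0" unfolding lb_def using b2 by simp
  have b1: "real (b - 1) \<ge> 1" using b2 by simp
  have rb: "real (b - 1) = real b - 1" using b2 by simp
  obtain e0 where e0: "e0 > 0" "\<forall>N. \<exists>n\<ge>N. e0 < ln (d_LZ b (prefix_of S n)) / real n"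
    using freq_of_limsup[OF lim] by blast
  define \<epsilon> where "\<epsilon> = min e0 (lb / 2)"
  have ep: "\<epsilon> > 0" unfolding \<epsilon>_def using e0 lbp by simp
  have ele: "\<epsilon> \<le> lb / 2" "\<epsilon> \<le> e0" unfolding \<epsilon>_def by auto
  define C where "C = 2 * lb + ln (1 + real b) + 2"
  have Cp: "C \<ge> 0" unfolding C_def using lbp by simp
  define C2 where "C2 = real (b - 1) * C + 1 + real b * lb"
  have C2p: "C2 > 0" unfolding C2_def using Cp b1 lbp by (simp add: add_nonneg_pos)
  define \<eta> where "\<eta> = \<epsilon> / (4 * C2)"
  have etp: "\<eta> > 0" unfolding \<eta>_def using ep C2p by simp
  obtain M where M: "\<forall>m\<ge>M. \<forall>j::nat. 1 \<le> j \<longrightarrow> real j * ln (real j) \<le> lb * real m + C * real j \<longrightarrow> real j \<le> \<eta> * real m"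
    using small_ratio[OF lbp Cp etp] by blast
  define \<alpha> where "\<alpha> = 1 - \<epsilon> / (2 * lb)"
  have a1: "\<alpha> < 1" unfolding \<alpha>_def using ep lbp by simp
  have "\<forall>N0. \<exists>m\<ge>N0. m \<in> {n. lz_full_parse b (prefix_of S n) \<and>
                 real (lz_D b (prefix_of S n)) * log b (real (lz_D b (prefix_of S n))) < \<alpha> * real (b - 1) * real n}"
  proof
    fix N0
    obtain n where nN: "n \<ge> 2 * (N0 + M + 1) + 1" and nd: "e0 < ln (d_LZ b (prefix_of S n)) / real n"
      using e0(2) by blast
    define w where "w = prefix_of S n"
    define ps where "ps = lz_phrases b w"
    define j where "j = length ps"
    define m where "m = length (concat ps)"
    define u where "u = lz_partial b w"
    have n1: "real n \<ge> 1" using nN by simp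
    have lw: "length w = n" unfolding w_def prefix_of_def by simp
    have wdec: "w = concat ps @ u" using parse_facts(1)[OF b2 Sb, of n] unfolding w_def ps_def u_def by simp
    have nmu: "n = m + length u" using arg_cong[OF wdec, of length] unfolding lw m_def by simp
    have jm: "j \<le> m" using parse_facts(2)[OF b2 Sb, of n] unfolding j_def m_def ps_def w_def by simp
    have ul: "length u \<le> 1 + j" using parse_facts(3)[OF b2 Sb, of n] unfolding j_def u_def ps_def w_def by simp
    have nm: "n \<le> 2 * m + 1" using nmu jm ul by linarith
    have mN0: "m \<ge> N0" using nN nm by presburger
    have mM: "m \<ge> M" using nN nm by presburger
    have m1: "m \<ge> 1" using nN nm by presburger
    note mN = mN0 mM m1
    have j1: "j \<ge> 1"
    proof (rule ccontr)
      assume "\<not> j \<ge> 1"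
      then have "ps = []" unfolding j_def by (cases ps) auto
      then show False using mN(3) unfolding m_def by simp
    qed
    have rj1: "real j \<ge> 1" using j1 by simp
    have rm1: "real m \<ge> 1" using mN by simp
    have nmr: "real n \<le> real m + real j + 1" using nmu ul by simp
    have lnd: "ln (d_LZ b w) > \<epsilon> * real n"
    proof -
      have "e0 * real n < ln (d_LZ b w)" using nd n1 unfolding w_def by (simp add: field_simps)
      moreover have "\<epsilon> * real n \<le> e0 * real n" using ele n1 by (intro mult_right_mono) auto
      ultimately show ?thesis by linarith
    qed
    have dpos: "d_LZ b w > 0"
    proof -
      have "d_LZ b w \<noteq> 0"
      proof
        assume "d_LZ b w = 0"
        then have "ln (d_LZ b w) = 0" by simp
        moreover have "\<epsilon> * real n > 0" using ep n1 by simp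
        ultimately show False using lnd by simp
      qed
      then show ?thesis using d_nonneg[of b w] by simp
    qed
    define K where "K = 1 + real b + real b * real j"
    have Kp: "K > 0" unfolding K_def by (simp add: add_pos_nonneg)
    have Fp: "real (fact_b b j) > 0" using fact_b_pos[of b j] by simp
    have dub: "d_LZ b w \<le> real b ^ n * K / real (fact_b b j)"
      using d_upper[OF b2 Sb, of n] unfolding w_def[symmetric] ps_def[symmetric] j_def[symmetric] K_def .
    have "ln (d_LZ b w) \<le> ln (real b ^ n * K / real (fact_b b j))" using dpos dub by (intro ln_mono) auto
    also have "\<dots> = real n * lb + ln K - ln (real (fact_b b j))"
      using Kp Fp b2 unfolding lb_def by (simp add: ln_div ln_mult ln_realpow)
    finally have lnd2: "ln (d_LZ b w) \<le> real n * lb + ln K - ln (real (fact_b b j))" .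
    have lnK: "ln K \<le> ln (1 + real b) + real j"
    proof -
      have "K \<le> (1 + real b) * (1 + real j)" unfolding K_def by (simp add: algebra_simps)
      then have "ln K \<le> ln ((1 + real b) * (1 + real j))" using Kp by (intro ln_mono) auto
      also have "\<dots> = ln (1 + real b) + ln (1 + real j)" by (simp add: ln_mult add_pos_nonneg)
      also have "ln (1 + real j) \<le> real j" by (rule ln_add_one_self_le_self) simp
      finally show ?thesis by simp
    qed
    have nle: "real n * (lb - \<epsilon>) \<le> (lb - \<epsilon>) * real m + (real j + 1) * lb"
    proof -
      have "real n * (lb - \<epsilon>) \<le> (real m + real j + 1) * (lb - \<epsilon>)"
        using nmr ele lbp by (intro mult_right_mono) auto
      also have "\<dots> = (lb - \<epsilon>) * real m + (real j + 1) * (lb - \<epsilon>)" by (simp add: algebra_simps)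
      also have "(real j + 1) * (lb - \<epsilon>) \<le> (real j + 1) * lb" using ep by (intro mult_left_mono) auto
      finally show ?thesis by simp
    qed
    have lnF: "ln (real (fact_b b j)) < (lb - \<epsilon>) * real m + (real j + 1) * lb + ln (1 + real b) + real j"
    proof -
      have "real n * (lb - \<epsilon>) = real n * lb - \<epsilon> * real n" by (simp add: algebra_simps)
      then show ?thesis using lnd lnd2 lnK nle by linarith
    qed
    have jlj0: "real j * ln (real j) < (lb - \<epsilon>) * real m + (real j + 1) * lb + ln (1 + real b) + 2 * real j"
      using lnF ln_fact_b_lower[OF b2, of j] by linarith
    have aux1: "(real j + 1) * lb \<le> 2 * lb * real j" using rj1 lbp by (simp add: algebra_simps)
    have aux2: "ln (1 + real b) \<le> ln (1 + real b) * real j"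
      using rj1 by (intro mult_le_cancel_left1[THEN iffD2]) (auto simp: add_pos_nonneg)
    have jlj: "real j * ln (real j) < (lb - \<epsilon>) * real m + C * real j"
    proof -
      have "C * real j = 2 * lb * real j + ln (1 + real b) * real j + 2 * real j" unfolding C_def by (simp add: algebra_simps)
      then show ?thesis using jlj0 aux1 aux2 by linarith
    qed
    have "real j * ln (real j) \<le> lb * real m + C * real j"
    proof -
      have "(lb - \<epsilon>) * real m \<le> lb * real m" using ep rm1 by (simp add: algebra_simps)
      then show ?thesis using jlj by linarith
    qed
    then have jeta: "real j \<le> \<eta> * real m" using M[rule_format, OF mM j1] by blast
    have pf: "lz_full_parse b (prefix_of S m) \<and> lz_phrases b (prefix_of S m) = ps"
      using prefix_full[OF b2 Sb, of n] unfolding m_def ps_def w_def by simp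
    have Dm: "lz_D b (prefix_of S m) = 1 + (b - 1) * j" using D_full[of b "prefix_of S m"] pf unfolding j_def by simp
    define D where "D = real (lz_D b (prefix_of S m))"
    have Dr: "D = 1 + real (b - 1) * real j" unfolding D_def Dm by simp
    have D1: "D \<ge> 1" unfolding Dr by simp
    have Dbj: "D \<le> real b * real j" unfolding Dr rb using rj1 by (simp add: algebra_simps)
    have lnj0: "ln (real j) \<ge> 0" using rj1 by simp
    have lnjj: "ln (real j) \<le> real j" using ln_le_minus_one[of "real j"] rj1 by linarith
    have "ln D \<le> ln (real b * real j)" using D1 Dbj by (intro ln_mono) auto
    also have "\<dots> = lb + ln (real j)" unfolding lb_def using b2 rj1 by (simp add: ln_mult)
    finally have lnD: "ln D \<le> lb + ln (real j)" .
    have "D * ln D \<le> D * (lb + ln (real j))" using lnD D1 by (intro mult_left_mono) auto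
    also have "\<dots> = D * lb + D * ln (real j)" by (simp add: algebra_simps)
    also have "D * lb \<le> real b * real j * lb" using Dbj lbp by (intro mult_right_mono) auto
    also have "D * ln (real j) = ln (real j) + real (b - 1) * (real j * ln (real j))" unfolding Dr by (simp add: algebra_simps)
    also have "real (b - 1) * (real j * ln (real j)) \<le> real (b - 1) * ((lb - \<epsilon>) * real m + C * real j)"
      using jlj b1 by (intro mult_left_mono) auto
    finally have DD: "D * ln D \<le> real b * real j * lb + real j + real (b - 1) * ((lb - \<epsilon>) * real m + C * real j)"
      using lnjj by linarith
    have "real b * real j * lb + real j + real (b - 1) * ((lb - \<epsilon>) * real m + C * real j)
          = real (b - 1) * (lb - \<epsilon>) * real m + C2 * real j" unfolding C2_def by (simp add: algebra_simps)
    also have "C2 * real j \<le> C2 * (\<eta> * real m)" using jeta C2p by (intro mult_left_mono) auto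
    also have "C2 * (\<eta> * real m) = \<epsilon> * real m / 4" unfolding \<eta>_def using C2p by (simp add: field_simps)
    also have "\<epsilon> * real m / 4 < real (b - 1) * (\<epsilon> / 2) * real m"
    proof -
      have "\<epsilon> * real m / 4 < \<epsilon> * real m / 2" using ep rm1 by simp
      also have "\<epsilon> * real m / 2 \<le> real (b - 1) * (\<epsilon> * real m / 2)"
      proof -
        have x0: "0 \<le> \<epsilon> * real m / 2" using ep rm1 by simp
        have "1 * (\<epsilon> * real m / 2) \<le> real (b - 1) * (\<epsilon> * real m / 2)" by (rule mult_right_mono[OF b1 x0])
        then show ?thesis by simp
      qed
      finally show ?thesis by (simp add: algebra_simps)
    qed
    finally have "D * ln D < real (b - 1) * (lb - \<epsilon>) * real m + real (b - 1) * (\<epsilon> / 2) * real m"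
      using DD by linarith
    also have "\<dots> = \<alpha> * real (b - 1) * real m * lb" unfolding \<alpha>_def using lbp by (simp add: field_simps)
    finally have "D * ln D < \<alpha> * real (b - 1) * real m * lb" .
    then have "D * (ln D / lb) < \<alpha> * real (b - 1) * real m" using lbp by (simp add: field_simps)
    then have "m \<in> {n. lz_full_parse b (prefix_of S n) \<and>
                 real (lz_D b (prefix_of S n)) * log b (real (lz_D b (prefix_of S n))) < \<alpha> * real (b - 1) * real n}"
      using pf unfolding D_def log_def lb_def by simp
    then show "\<exists>m\<ge>N0. m \<in> {n. lz_full_parse b (prefix_of S n) \<and>
                 real (lz_D b (prefix_of S n)) * log b (real (lz_D b (prefix_of S n))) < \<alpha> * real (b - 1) * real n}"
      using mN by auto
  qed
  then show ?thesis unfolding infinite_nat_iff_unbounded_le[symmetric] using a1 by blast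
qed


theorem corollary2p3:
  fixes b :: nat and S :: "nat \<Rightarrow> nat"
  assumes "b \<ge> 2" and "\<forall>i. S i < b"
  shows "(limsup (\<lambda>n. ereal (ln (d_LZ b (prefix_of S n)) / real n)) > 0
          \<longleftrightarrow> (\<exists>\<alpha>::real. \<alpha> < 1 \<and> infinite {n. lz_full_parse b (prefix_of S n) \<and>
                 real (lz_D b (prefix_of S n)) * log b (real n) < \<alpha> * real (b - 1) * real n}))
       \<and> (limsup (\<lambda>n. ereal (ln (d_LZ b (prefix_of S n)) / real n)) > 0
          \<longleftrightarrow> (\<exists>\<alpha>::real. \<alpha> < 1 \<and> infinite {n. lz_full_parse b (prefix_of S n) \<and>
                 real (lz_D b (prefix_of S n)) * log b (real (lz_D b (prefix_of S n))) < \<alpha> * real (b - 1) * real n}))"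
proof -
  have ba: "limsup (\<lambda>n. ereal (ln (d_LZ b (prefix_of S n)) / real n)) > 0"
    if "\<exists>\<alpha>::real. \<alpha> < 1 \<and> infinite {n. lz_full_parse b (prefix_of S n) \<and>
                 real (lz_D b (prefix_of S n)) * log b (real n) < \<alpha> * real (b - 1) * real n}"
    using that BA[OF assms] by blast
  have cb: "\<exists>\<alpha>::real. \<alpha> < 1 \<and> infinite {n. lz_full_parse b (prefix_of S n) \<and>
                 real (lz_D b (prefix_of S n)) * log b (real n) < \<alpha> * real (b - 1) * real n}"
    if "\<exists>\<alpha>::real. \<alpha> < 1 \<and> infinite {n. lz_full_parse b (prefix_of S n) \<and>
                 real (lz_D b (prefix_of S n)) * log b (real (lz_D b (prefix_of S n))) < \<alpha> * real (b - 1) * real n}"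
    using that CB[OF assms(1)] by blast
  have ac: "\<exists>\<alpha>::real. \<alpha> < 1 \<and> infinite {n. lz_full_parse b (prefix_of S n) \<and>
                 real (lz_D b (prefix_of S n)) * log b (real (lz_D b (prefix_of S n))) < \<alpha> * real (b - 1) * real n}"
    if "limsup (\<lambda>n. ereal (ln (d_LZ b (prefix_of S n)) / real n)) > 0"
    using AC[OF assms that] .
  show ?thesis using ba cb ac by blast
qed

end
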